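(* Let $n\ge 0$ be an integer and for $k\in\mathbb{Z}_+$ let $v_k(t)=c_k\,e^{-\frac{t^{2n+2}}{2n+2}}L^{(-\frac{1}{2n+2})}_{k}\!\left(\frac{t^{2n+2}}{n+1}\right)$ with $c_k>0$ chosen so that $\|t^nv_k\|_{L^2(\mathbb{R})}=1$, and let $v_k(z)$, $z\in\mathbb{C}$, denote its entire extension. Then $v_k(z)$ is an entire function of order $2n+2$ and of finite type, and there are constants $c_1>0$ and $C>0$, independent of $k$, such that $$|v_k(z)|\le C^{\,k+1}e^{c_1|z|^{2n+2}}\qquad\text{for all }z\in\mathbb{C},\ k\in\mathbb{Z}_+.$$
   Context: $L^{(a)}_k$ denotes the generalized Laguerre polynomial of degree $k$ and parameter $a$. An entire function $f$ has finite order if there are $C,a>0$ with $|f(z)|\le e^{|z|^{a}}$ for $|z|\ge C$; its order is the infimum of such $a$. *)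

theory Defs
  imports "HOL-Analysis.Analysis"
begin

definition gen_laguerre :: "nat \<Rightarrow> real \<Rightarrow> complex \<Rightarrow> complex" where
  "gen_laguerre k a x =
     (\<Sum>i\<le>k. complex_of_real ((-1) ^ i * ((real k + a) gchoose (k - i)) / fact i) * x ^ i)"

definition vfun :: "nat \<Rightarrow> (nat \<Rightarrow> real) \<Rightarrow> nat \<Rightarrow> complex \<Rightarrow> complex" where
  "vfun n c k z =
     complex_of_real (c k) * exp (- (z ^ (2*n+2)) / of_nat (2*n+2))
       * gen_laguerre k (- 1 / real (2*n+2)) (z ^ (2*n+2) / of_nat (n+1))"

definition order_exponents :: "(complex \<Rightarrow> complex) \<Rightarrow> real set" where
  "order_exponents f = {a. a > 0 \<and> (\<exists>C>0. \<forall>z. norm z \<ge> C \<longrightarrow> norm (f z) \<le> exp (norm z powr a))}"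

definition has_finite_order :: "(complex \<Rightarrow> complex) \<Rightarrow> bool" where
  "has_finite_order f \<longleftrightarrow> order_exponents f \<noteq> {}"

definition entire_order :: "(complex \<Rightarrow> complex) \<Rightarrow> real" where
  "entire_order f = Inf (order_exponents f)"

text \<open>Finite type with respect to order \<rho>: limsup_{r\<rightarrow>\<infinity>} log M(r) / r^\<rho> < \<infinity>, i.e.
  |f z| \<le> exp(A |z|^\<rho>) for all sufficiently large |z|, for some A.\<close>
definition has_finite_type :: "(complex \<Rightarrow> complex) \<Rightarrow> real \<Rightarrow> bool" where
  "has_finite_type f \<rho> \<longleftrightarrow>
     (\<exists>A C. \<forall>z. norm z \<ge> C \<longrightarrow> norm (f z) \<le> exp (A * norm z powr \<rho>))"

end

theory Submission
  imports Defs
begin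

lemma coef_bounds:
  fixes a::real assumes "-1/2 \<le> a" "a \<le> 0" "j \<le> k"
  shows "0 < (real k + a) gchoose j \<and> (real k + a) gchoose j \<le> 2^k"
proof -
  have e: "(real k + a) gchoose j = (\<Prod>i<j. real k + a - real j + 1 + real i) / fact j"
    by (simp add: gbinomial_pochhammer' pochhammer_prod atLeast0LessThan)
  have e2: "real (k choose j) = (\<Prod>i<j. real k - real j + 1 + real i) / fact j"
    by (simp add: binomial_gbinomial gbinomial_pochhammer' pochhammer_prod atLeast0LessThan)
  have p: "0 < (\<Prod>i<j. real k + a - real j + 1 + real i)"
    using assms by (intro prod_pos) auto
  have le: "(\<Prod>i<j. real k + a - real j + 1 + real i) \<le> (\<Prod>i<j. real k - real j + 1 + real i)"
    using assms by (intro prod_mono) auto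
  have "(real k + a) gchoose j \<le> real (k choose j)"
    unfolding e e2 by (intro divide_right_mono le) auto
  also have "\<dots> \<le> 2^k" using binomial_le_pow2[of k j]
    by (metis of_nat_le_iff of_nat_numeral of_nat_power)
  finally show ?thesis using p e by auto
qed

lemma coef0_lower:
  fixes a::real assumes "-1/2 \<le> a" "a \<le> 0"
  shows "(1/2)^k \<le> (real k + a) gchoose k"
proof -
  have e: "(real k + a) gchoose k = (\<Prod>i<k. a + 1 + real i) / fact k"
    by (simp add: gbinomial_pochhammer' pochhammer_prod atLeast0LessThan)
  have f: "fact k = (\<Prod>i<k. 1 + real i)"
    by (simp add: pochhammer_fact pochhammer_prod atLeast0LessThan)
  have "(1/2)^k * fact k = (\<Prod>i<k. (1/2) * (1 + real i))"
    by (simp only: f prod.distrib prod_constant card_lessThan)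
  also have "\<dots> \<le> (\<Prod>i<k. a + 1 + real i)"
    using assms by (intro prod_mono) auto
  finally show ?thesis unfolding e by (simp add: field_simps)
qed

lemma norm_term:
  fixes b :: real assumes "0 \<le> b"
  shows "norm (complex_of_real ((-1)^i * b / fact i) * x^i) = b * (norm x^i / fact i)"
proof -
  have "norm (complex_of_real ((-1)^i * b / fact i) * x^i) = \<bar>(-1)^i * b / fact i\<bar> * norm x ^ i"
    by (simp only: norm_mult norm_of_real norm_power)
  also have "\<bar>(-1)^i * b / fact i\<bar> = b / fact i" using assms by (simp add: abs_mult power_abs)
  finally show ?thesis by simp
qed

lemma pow_fact_le: fixes x :: real assumes "0 \<le> x" "x \<le> 1" "1 \<le> i"
  shows "x ^ i / fact i \<le> x"
proof -
  have "x ^ i \<le> x ^ 1" using assms by (intro power_decreasing) auto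
  moreover have "x^i / fact i \<le> x^i" using assms by (simp add: divide_le_eq mult_le_cancel_left1)
  ultimately show ?thesis by auto
qed

lemma exp_partial_le:
  fixes y :: real assumes "0 \<le> y"
  shows "(\<Sum>i\<le>k. y^i / fact i) \<le> exp y"
proof -
  have s: "(\<lambda>i. y^i / fact i) sums exp y"
    using exp_converges[of y] by (simp add: divide_inverse mult.commute)
  have "(\<Sum>i\<le>k. y^i / fact i) \<le> (\<Sum>i. y^i / fact i)"
    using s assms by (intro sum_le_suminf) (auto simp: sums_iff)
  thus ?thesis using s by (simp add: sums_iff)
qed

lemma L_upper:
  fixes a::real assumes "-1/2 \<le> a" "a \<le> 0"
  shows "norm (gen_laguerre k a x) \<le> 2^k * exp (norm x)"
proof -
  have "norm (gen_laguerre k a x) \<le>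
     (\<Sum>i\<le>k. norm (complex_of_real ((-1) ^ i * ((real k + a) gchoose (k - i)) / fact i) * x ^ i))"
    unfolding gen_laguerre_def by (rule norm_sum)
  also have "\<dots> \<le> (\<Sum>i\<le>k. 2^k * (norm x ^ i / fact i))"
  proof (intro sum_mono)
    fix i assume "i \<in> {..k}"
    then have cb: "0 < (real k + a) gchoose (k - i) \<and> (real k + a) gchoose (k - i) \<le> 2^k"
      using coef_bounds[OF assms, of "k - i" k] by auto
    have "norm (complex_of_real ((-1) ^ i * ((real k + a) gchoose (k - i)) / fact i) * x ^ i)
       = ((real k + a) gchoose (k - i)) * (norm x ^ i / fact i)"
      using cb by (intro norm_term) auto
    also have "\<dots> \<le> 2^k * (norm x ^ i / fact i)"
      using cb by (intro mult_right_mono) auto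
    finally show "norm (complex_of_real ((-1) ^ i * ((real k + a) gchoose (k - i)) / fact i) * x ^ i)
       \<le> 2^k * (norm x ^ i / fact i)" .
  qed
  also have "\<dots> = 2^k * (\<Sum>i\<le>k. norm x ^ i / fact i)" by (simp add: sum_distrib_left)
  also have "\<dots> \<le> 2^k * exp (norm x)"
    by (intro mult_left_mono exp_partial_le) auto
  finally show ?thesis .
qed

lemma L_neg:
  fixes a::real assumes "-1/2 \<le> a" "a \<le> 0" "0 \<le> s"
  shows "(real k + a) gchoose k \<le> norm (gen_laguerre k a (- complex_of_real s))"
proof -
  have "gen_laguerre k a (- complex_of_real s) =
      complex_of_real (\<Sum>i\<le>k. ((real k + a) gchoose (k - i)) * (s ^ i / fact i))"
    unfolding gen_laguerre_def of_real_sum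
  proof (intro sum.cong refl)
    fix i
    have "(-1::complex) ^ i * (-1) ^ i = 1" by (simp flip: power_mult_distrib)
    then show "complex_of_real ((- 1) ^ i * (real k + a gchoose (k - i)) / fact i) * (- complex_of_real s) ^ i =
         complex_of_real ((real k + a gchoose (k - i)) * (s ^ i / fact i))"
      by (simp add: power_minus[of "complex_of_real s"] mult_ac)
  qed
  moreover have "(real k + a) gchoose k \<le> (\<Sum>i\<le>k. ((real k + a) gchoose (k - i)) * (s ^ i / fact i))"
  proof -
    have "(real k + a) gchoose k = (\<lambda>i. ((real k + a) gchoose (k - i)) * (s ^ i / fact i)) 0" by simp
    also have "\<dots> \<le> (\<Sum>i\<le>k. ((real k + a) gchoose (k - i)) * (s ^ i / fact i))"
    proof (intro member_le_sum)
      fix i assume "i \<in> {..k} - {0}"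
      then have "0 < (real k + a) gchoose (k - i)" using coef_bounds[OF assms(1,2), of "k-i" k] by auto
      then show "0 \<le> ((real k + a) gchoose (k - i)) * (s ^ i / fact i)" using assms(3) by simp
    qed auto
    finally show ?thesis .
  qed
  ultimately show ?thesis by (simp only: norm_of_real)
qed

lemma L_diff:
  fixes a::real assumes "-1/2 \<le> a" "a \<le> 0" "norm x \<le> 1"
  shows "norm (gen_laguerre k a x - complex_of_real ((real k + a) gchoose k)) \<le> real k * 2^k * norm x"
proof -
  let ?f = "\<lambda>i. complex_of_real ((-1) ^ i * ((real k + a) gchoose (k - i)) / fact i) * x ^ i"
  have "gen_laguerre k a x = ?f 0 + sum ?f ({..k} - {0})"
    unfolding gen_laguerre_def by (subst sum.remove[of _ 0]) auto
  then have "gen_laguerre k a x - complex_of_real ((real k + a) gchoose k) = sum ?f ({..k} - {0})"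
    by simp
  also have "norm \<dots> \<le> (\<Sum>i\<in>{..k} - {0}. norm (?f i))" by (rule norm_sum)
  also have "\<dots> \<le> (\<Sum>i\<in>{..k} - {0}. 2^k * norm x)"
  proof (intro sum_mono)
    fix i assume i: "i \<in> {..k} - {0}"
    then have cb: "0 < (real k + a) gchoose (k - i) \<and> (real k + a) gchoose (k - i) \<le> 2^k"
      using coef_bounds[OF assms(1,2), of "k - i" k] by auto
    have "norm (?f i) = ((real k + a) gchoose (k - i)) * (norm x ^ i / fact i)"
      using cb by (intro norm_term) auto
    also have "\<dots> \<le> 2^k * norm x"
    proof (intro mult_mono)
      show "norm x ^ i / fact i \<le> norm x" using i assms(3) by (intro pow_fact_le) auto
    qed (use cb in auto)
    finally show "norm (?f i) \<le> 2^k * norm x" .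
  qed
  also have "\<dots> = real k * 2^k * norm x" by simp
  finally show ?thesis .
qed


lemma aux_arith: fixes x q :: real assumes "0 < q" "0 \<le> x"
  shows "x * q * (2/(4 * (x + 1) * q * q)) \<le> 1/q / 2"
proof -
  have "x * q * (2/(4 * (x + 1) * q * q)) = (x / (x + 1)) * (1/q / 2)"
    using assms by (simp add: divide_simps)
  also have "\<dots> \<le> 1 * (1/q / 2)" using assms by (intro mult_right_mono) auto
  finally show ?thesis by simp
qed
lemma int_lower:
  fixes f :: "real \<Rightarrow> real"
  assumes "(f has_integral 1) UNIV" "\<And>t. 0 \<le> f t" "\<alpha> \<le> \<beta>" "\<And>t. t \<in> {\<alpha>..\<beta>} \<Longrightarrow> G \<le> f t"
  shows "G * (\<beta> - \<alpha>) \<le> 1"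
proof -
  have "((\<lambda>t. G) has_integral G * (\<beta> - \<alpha>)) {\<alpha>..\<beta>}"
    using has_integral_const_real[of G \<alpha> \<beta>] assms(3) by (simp add: mult.commute)
  then have g: "((\<lambda>t. if t \<in> {\<alpha>..\<beta>} then G else 0) has_integral G * (\<beta> - \<alpha>)) UNIV"
    by (simp only: has_integral_restrict_UNIV)
  show ?thesis
    by (rule has_integral_le[OF g assms(1)]) (use assms(2,4) in auto)
qed

lemma a0_bounds: "-1/2 \<le> - 1 / real (2*n+2)" "- 1 / real (2*n+2) \<le> (0::real)"
  by (auto simp: field_simps)

lemma v_real_lower:
  fixes n k :: nat and c :: "nat \<Rightarrow> real" and t :: real
  assumes cpos: "c k > 0"
  defines "E \<equiv> 4 * (real k + 1) * 2^k * 2^k"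
  assumes t: "1/E \<le> t" "t \<le> 2/E"
  shows "(1/E)^n * (c k / 3 * (1/2)^(k+1)) \<le> norm (complex_of_real t ^ n * vfun n c k (complex_of_real t))"
proof -
  let ?a = "- 1 / real (2*n+2)"
  let ?b = "(real k + ?a) gchoose k"
  have E4: "4 \<le> E" unfolding E_def
    by (smt (verit) mult_le_cancel_left1 one_le_power of_nat_0_le_iff)
  have t0: "0 < t" using t E4 by (smt (verit) divide_pos_pos)
  have t1: "t \<le> 1" using t E4 by (smt (verit) divide_le_eq_1 frac_le)
  define s where "s = t^(2*n+2) / real (n+1)"
  have s0: "0 \<le> s" using t0 by (simp add: s_def)
  have "t^(2*n+2) \<le> t^1" using t0 t1 by (intro power_decreasing) auto
  then have st: "s \<le> t" using t0 unfolding s_def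
    by (smt (verit, best) divide_le_eq of_nat_0_le_iff mult_le_cancel_left1 power_one_right zero_le_power le_add2 of_nat_1 of_nat_le_iff mult.commute)
  have x: "complex_of_real t ^ (2*n+2) / of_nat (n+1) = complex_of_real s"
    by (simp add: s_def)
  have ex: "exp (- (complex_of_real t ^ (2*n+2)) / of_nat (2*n+2)) = complex_of_real (exp (- (t^(2*n+2)) / real (2*n+2)))"
    by (simp add: exp_of_real[symmetric])
  have "t^(2*n+2) \<le> 1" using t0 t1 by (intro power_le_one) auto
  then have "t^(2*n+2) / real (2*n+2) \<le> 1" by (simp add: divide_le_eq)
  then have "exp (-1) \<le> exp (- (t^(2*n+2)) / real (2*n+2))" by simp
  moreover have "1/3 \<le> exp (-1::real)"
    using exp_le by (simp add: exp_minus field_simps)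
  ultimately have exl: "1/3 \<le> exp (- (t^(2*n+2)) / real (2*n+2))" by linarith
  have "norm (gen_laguerre k ?a (complex_of_real s) - complex_of_real ?b) \<le> real k * 2^k * norm (complex_of_real s)"
    using s0 st t1 by (intro L_diff a0_bounds) auto
  also have "\<dots> \<le> real k * 2^k * (2/E)" using s0 st t by (intro mult_left_mono) auto
  also have "\<dots> \<le> (1/2)^k / 2" unfolding E_def using aux_arith[of "2^k" "real k"] by (simp add: power_one_over mult.assoc)
  finally have d: "norm (gen_laguerre k ?a (complex_of_real s) - complex_of_real ?b) \<le> (1/2)^k / 2" .
  have bl: "(1/2)^k \<le> ?b" by (intro coef0_lower a0_bounds)
  have "norm (complex_of_real ?b) \<le> norm (gen_laguerre k ?a (complex_of_real s)) + norm (gen_laguerre k ?a (complex_of_real s) - complex_of_real ?b)"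
    by (metis add.commute norm_triangle_ineq4 norm_minus_commute order_refl add_le_cancel_right norm_triangle_sub)
  moreover have "0 \<le> ?b" by (rule order_trans[OF _ bl]) simp
  then have "norm (complex_of_real ?b) = ?b" by (simp only: norm_of_real abs_of_nonneg)
  ultimately have Ll: "(1/2)^(k+1) \<le> norm (gen_laguerre k ?a (complex_of_real s))" using d bl by simp
  have "norm (vfun n c k (complex_of_real t)) = c k * exp (- (t^(2*n+2)) / real (2*n+2)) * norm (gen_laguerre k ?a (complex_of_real s))"
    unfolding vfun_def x ex using cpos by (simp add: norm_mult)
  also have "\<dots> \<ge> c k * (1/3) * (1/2)^(k+1)"
    using cpos exl Ll by (intro mult_mono) auto
  finally have vl: "c k / 3 * (1/2)^(k+1) \<le> norm (vfun n c k (complex_of_real t))" by simp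
  have "(1/E)^n \<le> t^n" using t t0 E4 by (intro power_mono) auto
  then have "(1/E)^n * (c k / 3 * (1/2)^(k+1)) \<le> t^n * norm (vfun n c k (complex_of_real t))"
    using vl cpos E4 t0 by (intro mult_mono) auto
  also have "\<dots> = norm (complex_of_real t ^ n * vfun n c k (complex_of_real t))"
    using t0 by (simp add: norm_mult norm_power)
  finally show ?thesis .
qed

lemma c_bound:
  fixes n :: nat and c :: "nat \<Rightarrow> real"
  assumes cpos: "\<And>k. c k > 0"
    and normalized: "\<And>k. ((\<lambda>t::real. (norm (complex_of_real t ^ n * vfun n c k (complex_of_real t)))\<^sup>2)
                         has_integral 1) UNIV"
  shows "c k \<le> (64 * 32^(2*n+1))^(k+1)"
proof -
  define E where "E = 4 * (real k + 1) * 2^k * 2^k"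
  have kk: "real k + 1 \<le> 2^k"
    using less_exp[of k] by (metis Suc_le_eq of_nat_Suc of_nat_le_iff of_nat_numeral of_nat_power add.commute)
  have E4: "4 \<le> E" unfolding E_def
    by (smt (verit) mult_le_cancel_left1 one_le_power of_nat_0_le_iff)
  have "E \<le> 4 * 2^k * 2^k * 2^k" unfolding E_def using kk by (intro mult_right_mono) auto
  also have "\<dots> = 4 * 8^k" by (simp add: power_mult_distrib[symmetric])
  also have "\<dots> \<le> 32 * 32^k" by (intro mult_mono power_mono) auto
  finally have Eb: "E \<le> 32^(k+1)" by simp
  define G where "G = ((1/E)^n * (c k / 3 * (1/2)^(k+1)))^2"
  have "G * (2/E - 1/E) \<le> 1"
  proof (rule int_lower[OF normalized])
    show "1/E \<le> 2/E" using E4 by (simp add: divide_right_mono)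
    fix t :: real assume "t \<in> {1/E..2/E}"
    then have "(1/E)^n * (c k / 3 * (1/2)^(k+1)) \<le> norm (complex_of_real t ^ n * vfun n c k (complex_of_real t))"
      unfolding E_def using cpos by (intro v_real_lower) auto
    then show "G \<le> (norm (complex_of_real t ^ n * vfun n c k (complex_of_real t)))\<^sup>2"
      unfolding G_def using cpos[of k] E4 by (intro power_mono) auto
  qed auto
  moreover have f4: "(2::real)^(k*2) = 4^k" by (subst mult.commute) (simp add: power_mult)
  have "G * (2/E - 1/E) = (c k)^2 / (E^(2*n+1) * 9 * 4^(k+1))"
    unfolding G_def using E4 f4
    by (simp add: power_mult_distrib power_divide field_simps power_mult[symmetric] power_add)
  ultimately have h: "(c k)^2 / (E^(2*n+1) * 9 * 4^(k+1)) \<le> 1" by linarith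
  have Qp: "0 < E^(2*n+1) * 9 * 4^(k+1)" using E4 by simp
  have "(c k)^2 \<le> E^(2*n+1) * 9 * 4^(k+1)"
    using h unfolding pos_divide_le_eq[OF Qp] by simp
  also have "\<dots> \<le> (32^(k+1))^(2*n+1) * 64^(k+1)"
  proof -
    have "E^(2*n+1) \<le> (32^(k+1))^(2*n+1)" using Eb E4 by (intro power_mono) auto
    moreover have "9 * 4^(k+1) \<le> (64::real)^(k+1)"
    proof -
      have "(16::real) \<le> 16^(k+1)" using one_le_power[of "16::real" k] by simp
      then have "(9::real) \<le> 16^(k+1)" by linarith
      then have "(9::real) * 4^(k+1) \<le> 16^(k+1) * 4^(k+1)" by (intro mult_right_mono) auto
      also have "\<dots> = 64^(k+1)" by (simp flip: power_mult_distrib)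
      finally show ?thesis .
    qed
    ultimately have "E^(2*n+1) * (9 * 4^(k+1)) \<le> (32^(k+1))^(2*n+1) * 64^(k+1)"
      using E4 by (intro mult_mono) auto
    then show ?thesis by (simp only: mult.assoc)
  qed
  also have "\<dots> = (64 * 32^(2*n+1))^(k+1)"
  proof -
    have "((32::real)^(k+1))^(2*n+1) = ((32::real)^(2*n+1))^(k+1)"
      by (simp flip: power_mult add: mult.commute)
    then show ?thesis unfolding power_mult_distrib by (simp only: mult.commute)
  qed
  finally have c2: "(c k)^2 \<le> (64 * 32^(2*n+1))^(k+1)" .
  show ?thesis
  proof (cases "c k \<le> 1")
    case True
    have "1 \<le> (32::real)^(2*n+1)" by (rule one_le_power) simp
    then have "1 \<le> (64 * 32^(2*n+1)::real)" by linarith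
    then have "1 \<le> (64 * 32^(2*n+1)::real)^(k+1)" by (rule one_le_power)
    then show ?thesis using True by linarith
  next
    case False
    then have "c k \<le> (c k)^2" by (simp add: power2_eq_square)
    then show ?thesis using c2 by linarith
  qed
qed


lemma growth:
  fixes p q L B :: real
  assumes "0 < p" "p < q" "0 \<le> L" "0 \<le> B"
  shows "\<exists>R\<ge>1. \<forall>r\<ge>R. L + B * r powr p \<le> r powr q"
proof -
  define R where "R = max 1 ((L + B + 1) powr (1/(q-p)))"
  have "\<forall>r\<ge>R. L + B * r powr p \<le> r powr q"
  proof (intro allI impI)
    fix r assume r: "R \<le> r"
    then have r1: "1 \<le> r" unfolding R_def by simp
    have "(L + B + 1) powr (1/(q-p)) \<le> r" using r unfolding R_def by simp
    then have "((L + B + 1) powr (1/(q-p))) powr (q-p) \<le> r powr (q-p)"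
      using assms by (intro powr_mono2) auto
    also have "((L + B + 1) powr (1/(q-p))) powr (q-p) = L + B + 1"
      using assms by (simp add: powr_powr)
    finally have h: "L + B + 1 \<le> r powr (q - p)" .
    have rp: "1 \<le> r powr p" using r1 assms by (simp add: ge_one_powr_ge_zero)
    have "L + B * r powr p \<le> (L + B) * r powr p"
      using rp assms by (simp add: algebra_simps) (simp add: mult_le_cancel_left1 mult.commute)
    also have "\<dots> \<le> r powr (q - p) * r powr p"
      using h rp by (intro mult_right_mono) auto
    also have "\<dots> = r powr q" using r1 by (simp add: powr_add[symmetric])
    finally show "L + B * r powr p \<le> r powr q" .
  qed
  moreover have "1 \<le> R" unfolding R_def by simp
  ultimately show ?thesis by blast
qed

lemma div_le_self': fixes x d :: real assumes "0 \<le> x" "1 \<le> d" shows "x / d \<le> x"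
  using assms by (simp add: divide_le_eq mult_le_cancel_left1)

lemma v_upper:
  assumes cpos: "c k > 0"
  shows "norm (vfun n c k z) \<le> c k * 2^k * exp (2 * norm z ^ (2*n+2))"
proof -
  let ?a = "- 1 / real (2*n+2)"
  have e: "norm (exp (- (z ^ (2*n+2)) / of_nat (2*n+2))) \<le> exp (norm z ^ (2*n+2))"
  proof -
    have "norm (exp (- (z ^ (2*n+2)) / of_nat (2*n+2))) \<le> exp (norm (- (z ^ (2*n+2)) / of_nat (2*n+2)))"
      by (rule norm_exp)
    also have "norm (- (z ^ (2*n+2)) / (of_nat (2*n+2) :: complex)) = norm z ^ (2*n+2) / real (2*n+2)"
      by (simp only: norm_divide norm_minus_cancel norm_power norm_of_nat)
    also have "\<dots> \<le> norm z ^ (2*n+2)" by (rule div_le_self') auto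
    finally show ?thesis by simp
  qed
  have l: "norm (gen_laguerre k ?a (z ^ (2*n+2) / of_nat (n+1))) \<le> 2^k * exp (norm z ^ (2*n+2))"
  proof -
    have "norm (gen_laguerre k ?a (z ^ (2*n+2) / of_nat (n+1))) \<le> 2^k * exp (norm (z ^ (2*n+2) / (of_nat (n+1) :: complex)))"
      by (intro L_upper a0_bounds)
    also have "norm (z ^ (2*n+2) / (of_nat (n+1) :: complex)) = norm z ^ (2*n+2) / real (n+1)"
      by (simp only: norm_divide norm_power norm_of_nat)
    also have "\<dots> \<le> norm z ^ (2*n+2)" by (rule div_le_self') auto
    finally show ?thesis by simp
  qed
  have "norm (vfun n c k z) = c k * norm (exp (- (z ^ (2*n+2)) / of_nat (2*n+2))) * norm (gen_laguerre k ?a (z ^ (2*n+2) / of_nat (n+1)))"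
    unfolding vfun_def using cpos by (simp add: norm_mult)
  also have "\<dots> \<le> c k * exp (norm z ^ (2*n+2)) * (2^k * exp (norm z ^ (2*n+2)))"
    using cpos e l by (intro mult_mono) auto
  also have "\<dots> = c k * 2^k * exp (2 * norm z ^ (2*n+2))"
    by (simp add: exp_add[symmetric] mult_ac)
  finally show ?thesis .
qed

lemma cis_pow: assumes "0 < N" shows "cis (pi / real N) ^ N = -1"
proof -
  have "cis (pi / real N) ^ N = cis (real N * (pi / real N))" by (rule Complex.DeMoivre)
  also have "real N * (pi / real N) = pi" using assms by simp
  finally show ?thesis by simp
qed

lemma ray_pow: assumes "0 < N" shows "(complex_of_real r * cis (pi / real N)) ^ N = - complex_of_real (r ^ N)"
  unfolding power_mult_distrib cis_pow[OF assms] of_real_power by simp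


lemma v_lower_ray:
  fixes n k :: nat and r :: real and c :: "nat \<Rightarrow> real"
  assumes cpos: "c k > 0" and r: "0 \<le> r"
  defines "z \<equiv> complex_of_real r * cis (pi / real (2*n+2))"
  shows "norm z = r"
    and "c k * ((real k - 1 / real (2*n+2)) gchoose k) * exp (r ^ (2*n+2) / real (2*n+2)) \<le> norm (vfun n c k z)"
proof -
  show "norm z = r" unfolding z_def using r by (simp add: norm_mult)
  let ?a = "- 1 / real (2*n+2)"
  have zm: "z ^ (2*n+2) = - complex_of_real (r ^ (2*n+2))"
    unfolding z_def by (rule ray_pow) simp
  have ex: "exp (- (z ^ (2*n+2)) / of_nat (2*n+2)) = complex_of_real (exp (r ^ (2*n+2) / real (2*n+2)))"
    unfolding zm by (simp add: exp_of_real[symmetric])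
  have lx: "z ^ (2*n+2) / of_nat (n+1) = - complex_of_real (r ^ (2*n+2) / real (n+1))"
    unfolding zm by simp
  have L: "(real k + ?a) gchoose k \<le> norm (gen_laguerre k ?a (z ^ (2*n+2) / of_nat (n+1)))"
    unfolding lx using r by (intro L_neg a0_bounds) auto
  have "norm (vfun n c k z) = c k * exp (r ^ (2*n+2) / real (2*n+2)) * norm (gen_laguerre k ?a (z ^ (2*n+2) / of_nat (n+1)))"
    unfolding vfun_def ex using cpos by (simp add: norm_mult)
  also have "\<dots> \<ge> c k * exp (r ^ (2*n+2) / real (2*n+2)) * ((real k + ?a) gchoose k)"
    using cpos L by (intro mult_left_mono) auto
  finally show "c k * ((real k - 1 / real (2*n+2)) gchoose k) * exp (r ^ (2*n+2) / real (2*n+2)) \<le> norm (vfun n c k z)"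
    by (simp add: mult_ac)
qed

lemma v_holo: "vfun n c k holomorphic_on UNIV"
  unfolding vfun_def gen_laguerre_def by (intro holomorphic_intros) auto


lemma lin_aux: fixes x l :: real assumes "1 \<le> x" "0 \<le> l" shows "l + 2*x \<le> (2+l)*x"
  using mult_left_mono[of 1 x l] assms by (simp add: algebra_simps)

lemma K_exp: fixes K :: real assumes "0 < K" shows "K * exp x = exp (ln K + x)"
  using assms by (simp add: exp_add)

theorem proposition5p6:
  fixes n :: nat and c :: "nat \<Rightarrow> real"
  assumes cpos: "\<And>k. c k > 0"
    and normalized: "\<And>k. ((\<lambda>t::real. (norm (complex_of_real t ^ n * vfun n c k (complex_of_real t)))\<^sup>2)
                         has_integral 1) UNIV"
  shows "(\<forall>k. vfun n c k holomorphic_on UNIV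
             \<and> has_finite_order (vfun n c k)
             \<and> entire_order (vfun n c k) = real (2*n+2)
             \<and> has_finite_type (vfun n c k) (real (2*n+2)))
         \<and> (\<exists>c1>0. \<exists>C>0. \<forall>k z. norm (vfun n c k z) \<le> C ^ (k+1) * exp (c1 * norm z ^ (2*n+2)))"
proof -
  define D :: real where "D = 64 * 32^(2*n+1)"
  have D1: "1 \<le> D"
  proof -
    have "1 \<le> (32::real)^(2*n+1)" by (rule one_le_power) simp
    then show ?thesis unfolding D_def by linarith
  qed
  have unif: "norm (vfun n c k z) \<le> (2*D)^(k+1) * exp (2 * norm z ^ (2*n+2))" for k z
  proof -
    have "norm (vfun n c k z) \<le> c k * 2^k * exp (2 * norm z ^ (2*n+2))"
      using cpos by (rule v_upper)
    also have "c k * 2^k \<le> D^(k+1) * 2^(k+1)"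
      using c_bound[OF cpos normalized, of k] cpos[of k] D1 unfolding D_def
      by (intro mult_mono power_increasing) auto
    also have "D^(k+1) * 2^(k+1) = (2*D)^(k+1)" by (simp add: power_mult_distrib)
    finally show ?thesis by (simp add: mult_right_mono)
  qed
  have each: "vfun n c k holomorphic_on UNIV
             \<and> has_finite_order (vfun n c k)
             \<and> entire_order (vfun n c k) = real (2*n+2)
             \<and> has_finite_type (vfun n c k) (real (2*n+2))" for k
  proof -
    define K where "K = (2*D)^(k+1)"
    have K1: "1 \<le> K" unfolding K_def using D1 by (intro one_le_power) auto
    then have lnK: "0 \<le> ln K" by simp
    have bnd: "norm (vfun n c k z) \<le> exp (ln K + 2 * norm z ^ (2*n+2))" for z
    proof -
      have "norm (vfun n c k z) \<le> K * exp (2 * norm z ^ (2*n+2))" using unif[of k z] unfolding K_def .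
      also have "\<dots> = exp (ln K + 2 * norm z ^ (2*n+2))" using K1 by (intro K_exp) auto
      finally show ?thesis .
    qed
    have pos: "a \<in> order_exponents (vfun n c k)" if a: "real (2*n+2) < a" for a
    proof -
      obtain R where R: "R \<ge> 1" "\<And>r. r \<ge> R \<Longrightarrow> ln K + 2 * r powr real (2*n+2) \<le> r powr a"
        using growth[of "real (2*n+2)" a "ln K" 2] a lnK by auto
      have allz: "\<forall>z. norm z \<ge> R \<longrightarrow> norm (vfun n c k z) \<le> exp (norm z powr a)"
      proof (intro allI impI)
        fix z :: complex assume z: "norm z \<ge> R"
        then have "0 < norm z" using R by linarith
        then have "norm z powr real (2*n+2) = norm z ^ (2*n+2)" by (rule powr_realpow)
        then have "ln K + 2 * norm z ^ (2*n+2) \<le> norm z powr a" using R(2)[OF z] by simp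
        then show "norm (vfun n c k z) \<le> exp (norm z powr a)"
          using bnd[of z] by (meson exp_le_cancel_iff order_trans)
      qed
      have "0 < a" using a by (smt (verit) of_nat_0_le_iff)
      moreover have "\<exists>C>0. \<forall>z. norm z \<ge> C \<longrightarrow> norm (vfun n c k z) \<le> exp (norm z powr a)"
        using R(1) allz by (intro exI[of _ R]) auto
      ultimately show ?thesis unfolding order_exponents_def by simp
    qed
    have neg: "real (2*n+2) \<le> a" if a: "a \<in> order_exponents (vfun n c k)" for a
    proof (rule ccontr)
      assume "\<not> real (2*n+2) \<le> a"
      then have am: "a < real (2*n+2)" by simp
      from a obtain C where a0: "a > 0" and C: "C > 0" "\<And>z. norm z \<ge> C \<Longrightarrow> norm (vfun n c k z) \<le> exp (norm z powr a)"
        unfolding order_exponents_def by auto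
      define \<beta> where "\<beta> = c k * ((real k - 1 / real (2*n+2)) gchoose k)"
      have "(1/2)^k \<le> (real k + - 1 / real (2*n+2)) gchoose k" by (intro coef0_lower a0_bounds)
      then have "0 < (real k + - 1 / real (2*n+2)) gchoose k"
        using zero_less_power[of "1/2::real" k] by linarith
      then have "0 < (real k - 1 / real (2*n+2)) gchoose k" by simp
      then have b0: "0 < \<beta>" unfolding \<beta>_def using cpos[of k] by simp
      define M where "M = real (2*n+2)"
      have M0: "0 < M" unfolding M_def by simp
      obtain R where R: "R \<ge> 1" "\<And>r. r \<ge> R \<Longrightarrow> M * (\<bar>ln \<beta>\<bar> + 1) + M * r powr a \<le> r powr M"
        using growth[of a M "M * (\<bar>ln \<beta>\<bar> + 1)" M] a0 am M0 unfolding M_def by auto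
      define r where "r = max R C"
      have r1: "r \<ge> 1" "r \<ge> R" "r \<ge> C" unfolding r_def using R by auto
      define z where "z = complex_of_real r * cis (pi / real (2*n+2))"
      have nz: "norm z = r" and lo: "\<beta> * exp (r ^ (2*n+2) / real (2*n+2)) \<le> norm (vfun n c k z)"
        using v_lower_ray[of c k r n] cpos[of k] r1 unfolding z_def \<beta>_def by auto
      have up: "norm (vfun n c k z) \<le> exp (r powr a)" using C(2)[of z] nz r1 by simp
      have "r powr M = r ^ (2*n+2)" unfolding M_def using r1 by (intro powr_realpow) auto
      then have "M * (\<bar>ln \<beta>\<bar> + 1) + M * r powr a \<le> r ^ (2*n+2)" using R(2)[OF r1(2)] by simp
      then have "(\<bar>ln \<beta>\<bar> + 1) + r powr a \<le> r ^ (2*n+2) / M" using M0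
        by (simp add: field_simps)
      then have "r powr a < ln \<beta> + r ^ (2*n+2) / real (2*n+2)" unfolding M_def by linarith
      then have "exp (r powr a) < exp (ln \<beta> + r ^ (2*n+2) / real (2*n+2))" by simp
      also have "\<dots> = \<beta> * exp (r ^ (2*n+2) / real (2*n+2))" using b0 by (simp add: exp_add)
      finally show False using lo up by linarith
    qed
    have S: "order_exponents (vfun n c k) \<noteq> {}" using pos[of "real (2*n+2) + 1"] by auto
    have bdd: "bdd_below (order_exponents (vfun n c k))" unfolding bdd_below_def using neg by blast
    have ord: "entire_order (vfun n c k) = real (2*n+2)"
    proof (rule antisym)
      show "real (2*n+2) \<le> entire_order (vfun n c k)"
        unfolding entire_order_def using S neg by (intro cInf_greatest) auto
      show "entire_order (vfun n c k) \<le> real (2*n+2)"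
      proof (rule ccontr)
        assume h: "\<not> entire_order (vfun n c k) \<le> real (2*n+2)"
        let ?a = "(entire_order (vfun n c k) + real (2*n+2)) / 2"
        have "?a \<in> order_exponents (vfun n c k)" using h by (intro pos) auto
        then have "entire_order (vfun n c k) \<le> ?a" unfolding entire_order_def
          using bdd by (rule cInf_lower)
        then show False using h by (simp add: field_simps)
      qed
    qed
    have ftyp: "has_finite_type (vfun n c k) (real (2*n+2))"
      unfolding has_finite_type_def
    proof (intro exI allI impI)
      fix z :: complex assume z: "1 \<le> norm z"
      have p: "norm z powr real (2*n+2) = norm z ^ (2*n+2)" using z by (intro powr_realpow) auto
      have "1 \<le> norm z ^ (2*n+2)" using z by (rule one_le_power)
      then have "ln K + 2 * norm z ^ (2*n+2) \<le> (2 + ln K) * norm z ^ (2*n+2)"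
        using lnK by (rule lin_aux)
      then show "norm (vfun n c k z) \<le> exp ((2 + ln K) * norm z powr real (2*n+2))"
        unfolding p using bnd[of z] by (meson exp_le_cancel_iff order_trans)
    qed
    show ?thesis using v_holo S ord ftyp unfolding has_finite_order_def by auto
  qed
  have u2: "\<forall>k z. norm (vfun n c k z) \<le> (2*D) ^ (k+1) * exp (2 * norm z ^ (2*n+2))"
    using unif by blast
  have ex2: "\<exists>C>0. \<forall>k z. norm (vfun n c k z) \<le> C ^ (k+1) * exp (2 * norm z ^ (2*n+2))"
  proof (rule exI[of _ "2*D"], intro conjI)
    show "0 < 2*D" using D1 by simp
  qed (rule u2)
  have "\<exists>c1>0. \<exists>C>0. \<forall>k z. norm (vfun n c k z) \<le> C ^ (k+1) * exp (c1 * norm z ^ (2*n+2))"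
    by (rule exI[of _ "2::real"], rule conjI[OF _ ex2]) simp
  then show ?thesis using each by blast
qed
end
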